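(* Let $\mathbf{X}\in\mathbb{R}^{m\times n}$ be nonzero, fix $p$ with $0<p<1$, and let $\mathbf{X}=\mathbf{L}\boldsymbol{\Sigma}\mathbf{R}^\top$ be a singular value decomposition of $\mathbf{X}$ with singular values $\sigma_1(\mathbf{X})\ge\sigma_2(\mathbf{X})\ge\dots\ge\sigma_{\min(m,n)}(\mathbf{X})\ge0$. Let $\bar d$ be the largest integer such that $$\sigma_{\bar d}(\mathbf{X})>\frac{1-p}{p+(1-p)\bar d}\sum_{i=1}^{\bar d}\sigma_i(\mathbf{X}),$$ and set $\mu=\frac{1-p}{p+(1-p)\bar d}\sum_{i=1}^{\bar d}\sigma_i(\mathbf{X})$. Then the (unique) optimal solution of $$\min_{\mathbf{A}\in\mathbb{R}^{m\times n}}\ \|\mathbf{X}-\mathbf{A}\|_F^2+\frac{1-p}{p}\|\mathbf{A}\|_\star^2$$ is $\mathbf{A}^{\rm opt}=\mathbf{L}\,\mathcal{S}_\mu(\boldsymbol{\Sigma})\,\mathbf{R}^\top$, where $\mathcal{S}_\mu(\sigma)=\max(\sigma-\mu,0)$ is applied entrywise to the singular values on the diagonal of $\boldsymbol{\Sigma}$.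
   Context: $\|\cdot\|_F$ is the Frobenius norm and $\|\cdot\|_\star$ the nuclear norm (sum of singular values). *)

theory Defs
  imports "Jordan_Normal_Form.Char_Poly" "HOL-Computational_Algebra.Polynomial"
begin

definition frob_norm :: "real mat \<Rightarrow> real" where
  "frob_norm A = sqrt (\<Sum>i<dim_row A. \<Sum>j<dim_col A. (A $$ (i,j))^2)"

text \<open>Singular values of A are the square roots of the eigenvalues of A^T A
  (with multiplicity); the nuclear norm is their sum.\<close>
definition nuc_norm :: "real mat \<Rightarrow> real" where
  "nuc_norm A = (\<Sum>x\<in>#proots (char_poly (transpose_mat A * A)). sqrt x)"

definition orth_mat :: "nat \<Rightarrow> real mat \<Rightarrow> bool" where
  "orth_mat k U \<longleftrightarrow> U \<in> carrier_mat k k \<and> transpose_mat U * U = 1\<^sub>m k"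

definition is_svd :: "nat \<Rightarrow> nat \<Rightarrow> real mat \<Rightarrow> real mat \<Rightarrow> real mat \<Rightarrow> real mat \<Rightarrow> bool" where
  "is_svd m n X L S R \<longleftrightarrow>
     X \<in> carrier_mat m n \<and> orth_mat m L \<and> orth_mat n R \<and>
     S \<in> carrier_mat m n \<and> diagonal_mat S \<and>
     (\<forall>i<min m n. 0 \<le> S $$ (i,i)) \<and>
     (\<forall>i j. i \<le> j \<longrightarrow> j < min m n \<longrightarrow> S $$ (j,j) \<le> S $$ (i,i)) \<and>
     X = L * S * transpose_mat R"

definition soft_thr_diag :: "real \<Rightarrow> real mat \<Rightarrow> real mat" where
  "soft_thr_diag \<mu> S = mat (dim_row S) (dim_col S)
     (\<lambda>(i,j). if i = j then max (S $$ (i,i) - \<mu>) 0 else 0)"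

text \<open>The i-th singular value (1-based) read off the diagonal of S.\<close>
definition sv :: "real mat \<Rightarrow> nat \<Rightarrow> real" where
  "sv S i = S $$ (i - 1, i - 1)"

definition d_bar :: "real \<Rightarrow> nat \<Rightarrow> nat \<Rightarrow> real mat \<Rightarrow> nat" where
  "d_bar p m n S = (GREATEST d::nat. 1 \<le> d \<and> d \<le> min m n \<and>
      sv S d > (1 - p) / (p + (1 - p) * real d) * (\<Sum>i=1..d. sv S i))"

definition mu_thr :: "real \<Rightarrow> nat \<Rightarrow> nat \<Rightarrow> real mat \<Rightarrow> real" where
  "mu_thr p m n S = (let d = d_bar p m n S in
      (1 - p) / (p + (1 - p) * real d) * (\<Sum>i=1..d. sv S i))"

end

theory Submission imports Defs "HOL-Computational_Algebra.Fundamental_Theorem_Algebra" "HOL-Analysis.L2_Norm" begin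

lemma sym_scalar:
  fixes M :: "'a::comm_ring_1 mat"
  assumes M: "M \<in> carrier_mat n n" and S: "transpose_mat M = M"
    and x: "x \<in> carrier_vec n" and y: "y \<in> carrier_vec n"
  shows "x \<bullet> (M *\<^sub>v y) = y \<bullet> (M *\<^sub>v x)"
proof -
  have "x \<bullet> (M *\<^sub>v y) = (transpose_mat M *\<^sub>v x) \<bullet> y" using transpose_vec_mult_scalar[OF M y x] by simp
  also have "\<dots> = y \<bullet> (M *\<^sub>v x)" using S comm_scalar_prod[of y n "M *\<^sub>v x"] M x y by simp
  finally show ?thesis .
qed

lemma rsq_ge0: "(v::real vec) \<bullet> v \<ge> 0"
  by (simp add: scalar_prod_def sum_nonneg)

lemma rsq_eq0: assumes "(v::real vec) \<in> carrier_vec n" shows "(v \<bullet> v = 0) = (v = 0\<^sub>v n)"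
proof
  assume "v \<bullet> v = 0"
  hence "(\<Sum>i\<in>{0..<n}. v$i * v$i) = 0" using assms by (simp add: scalar_prod_def)
  hence "\<forall>i\<in>{0..<n}. v$i * v$i = 0" by (subst sum_nonneg_eq_0_iff[symmetric], auto)
  thus "v = 0\<^sub>v n" using assms by (intro eq_vecI, auto)
qed (insert assms, auto)

lemma normalize_eigen:
  fixes M :: "real mat"
  assumes a: "a \<in> carrier_vec n" and a0: "a \<bullet> a \<noteq> 0" and Ma: "M \<in> carrier_mat n n" "M *\<^sub>v a = e \<cdot>\<^sub>v a"
  shows "\<exists>u. u \<in> carrier_vec n \<and> u \<bullet> u = 1 \<and> M *\<^sub>v u = e \<cdot>\<^sub>v u"
proof -
  have pos: "a \<bullet> a > 0" using a0 rsq_ge0[of a] by linarith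
  define u where "u = (1 / sqrt (a \<bullet> a)) \<cdot>\<^sub>v a"
  have "u \<bullet> u = (1 / sqrt (a \<bullet> a)) * ((1 / sqrt (a \<bullet> a)) * (a \<bullet> a))"
    unfolding u_def using a by simp
  also have "\<dots> = 1" using pos by (simp add: field_simps)
  finally have uu: "u \<bullet> u = 1" .
  have Mu: "M *\<^sub>v u = e \<cdot>\<^sub>v u" unfolding u_def using Ma a
    by (simp add: mult_mat_vec smult_smult_assoc mult.commute)
  have "u \<in> carrier_vec n" unfolding u_def using a by simp
  thus ?thesis using uu Mu by blast
qed

lemma real_eigen:
  fixes M :: "real mat"
  assumes M: "M \<in> carrier_mat n n" and S: "transpose_mat M = M" and n: "n > 0"
  shows "\<exists>e u. u \<in> carrier_vec n \<and> u \<bullet> u = 1 \<and> M *\<^sub>v u = e \<cdot>\<^sub>v u"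
proof -
  let ?Mc = "map_mat complex_of_real M"
  have Mc: "?Mc \<in> carrier_mat n n" using M by simp
  have "degree (char_poly ?Mc) = n" using degree_monic_char_poly[OF Mc] by simp
  hence "\<not> constant (poly (char_poly ?Mc))" using n by (simp add: constant_degree)
  then obtain z where "poly (char_poly ?Mc) z = 0" using fundamental_theorem_of_algebra by blast
  hence "eigenvalue ?Mc z" using eigenvalue_root_char_poly[OF Mc] by simp
  then obtain v where v: "v \<in> carrier_vec n" "v \<noteq> 0\<^sub>v n" "?Mc *\<^sub>v v = z \<cdot>\<^sub>v v"
    unfolding eigenvalue_def eigenvector_def using Mc by auto
  define a where "a = vec n (\<lambda>i. Re (v$i))"
  define b where "b = vec n (\<lambda>i. Im (v$i))"
  have a: "a \<in> carrier_vec n" and b: "b \<in> carrier_vec n" unfolding a_def b_def by auto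
  have key: "(M *\<^sub>v a)$i = Re z * a$i - Im z * b$i \<and> (M *\<^sub>v b)$i = Im z * a$i + Re z * b$i"
    if i: "i < n" for i
  proof -
    have "(?Mc *\<^sub>v v)$i = z * v$i" using v i by simp
    moreover have "(?Mc *\<^sub>v v)$i = (\<Sum>j<n. of_real (M$$(i,j)) * v$j)" 
      using i M v(1) by (simp add: scalar_prod_def lessThan_atLeast0)
    moreover have "(M *\<^sub>v a)$i = (\<Sum>j<n. M$$(i,j) * Re (v$j))" 
      using i M a by (simp add: scalar_prod_def lessThan_atLeast0 a_def)
    moreover have "(M *\<^sub>v b)$i = (\<Sum>j<n. M$$(i,j) * Im (v$j))" 
      using i M b by (simp add: scalar_prod_def lessThan_atLeast0 b_def)
    ultimately have e1: "z * v$i = (\<Sum>j<n. of_real (M$$(i,j)) * v$j)"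
      and e2: "(M *\<^sub>v a)$i = (\<Sum>j<n. M$$(i,j) * Re (v$j))"
      and e3: "(M *\<^sub>v b)$i = (\<Sum>j<n. M$$(i,j) * Im (v$j))" by auto
    have "Re (z * v$i) = Re (\<Sum>j<n. of_real (M$$(i,j)) * v$j)"
         "Im (z * v$i) = Im (\<Sum>j<n. of_real (M$$(i,j)) * v$j)" using e1 by auto
    thus ?thesis using i e2 e3 unfolding a_def b_def by (simp add: Re_sum Im_sum)
  qed
  have Ma: "M *\<^sub>v a = Re z \<cdot>\<^sub>v a - Im z \<cdot>\<^sub>v b" 
    by (rule eq_vecI, insert key a b M, auto)
  have Mb: "M *\<^sub>v b = Im z \<cdot>\<^sub>v a + Re z \<cdot>\<^sub>v b" 
    by (rule eq_vecI, insert key a b M, auto)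
  have "b \<bullet> (M *\<^sub>v a) = a \<bullet> (M *\<^sub>v b)" using sym_scalar[OF M S b a] .
  hence "Re z * (b \<bullet> a) - Im z * (b \<bullet> b) = Im z * (a \<bullet> a) + Re z * (a \<bullet> b)"
    unfolding Ma Mb using a b
    by (simp add: scalar_prod_minus_distrib scalar_prod_add_distrib)
  hence "Im z * (a \<bullet> a + b \<bullet> b) = 0" using comm_scalar_prod[OF a b]
    by (simp add: algebra_simps)
  moreover have "a \<bullet> a + b \<bullet> b \<noteq> 0"
  proof
    assume "a \<bullet> a + b \<bullet> b = 0"
    moreover have "a \<bullet> a \<ge> 0" "b \<bullet> b \<ge> 0" using rsq_ge0 by auto
    ultimately have "a \<bullet> a = 0" "b \<bullet> b = 0" by auto
    hence "a = 0\<^sub>v n" "b = 0\<^sub>v n" using a b rsq_eq0 by auto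
    hence "\<And>i. i < n \<Longrightarrow> Re (v$i) = 0 \<and> Im (v$i) = 0" unfolding a_def b_def
      by (metis index_vec index_zero_vec(1))
    hence "v = 0\<^sub>v n" using v(1) by (intro eq_vecI, auto simp: complex_eq_iff)
    thus False using v by simp
  qed
  ultimately have imz: "Im z = 0" by simp
  show ?thesis
  proof (cases "a \<bullet> a = 0")
    case False
    have "M *\<^sub>v a = Re z \<cdot>\<^sub>v a" using Ma imz a b by (intro eq_vecI, auto)
    thus ?thesis using normalize_eigen[OF a False M] by blast
  next
    case True
    hence "b \<bullet> b \<noteq> 0" using \<open>a \<bullet> a + b \<bullet> b \<noteq> 0\<close> by simp
    moreover have "M *\<^sub>v b = Re z \<cdot>\<^sub>v b" using Mb imz a b by (intro eq_vecI, auto)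
    ultimately show ?thesis using normalize_eigen[OF b _ M] by blast
  qed
qed
lemma householder:
  fixes u :: "real vec"
  assumes u: "u \<in> carrier_vec n" and uu: "u \<bullet> u = 1" and n: "0 < n"
  shows "\<exists>H. H \<in> carrier_mat n n \<and> transpose_mat H * H = 1\<^sub>m n \<and> col H 0 = u"
proof (cases "u = unit_vec n 0")
  case True
  thus ?thesis using n by (intro exI[of _ "1\<^sub>m n"], auto)
next
  case False
  define w where "w = u - unit_vec n 0"
  have w: "w \<in> carrier_vec n" unfolding w_def using u by simp
  have wi: "w$i = u$i - (if i = 0 then 1 else 0)" if "i < n" for i
    unfolding w_def using that u by (simp add: unit_vec_def)
  have w0: "w \<noteq> 0\<^sub>v n"
  proof
    assume "w = 0\<^sub>v n"
    hence "\<And>i. i < n \<Longrightarrow> u$i = unit_vec n 0 $ i" using wi by (auto simp: unit_vec_def)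
    hence "u = unit_vec n 0" using u by (intro eq_vecI, auto)
    thus False using False by simp
  qed
  define c where "c = w \<bullet> w"
  have c0: "c \<noteq> 0" unfolding c_def using rsq_eq0[OF w] w0 by simp
  have cu: "c = 2 - 2 * u$0"
  proof -
    have "c = (\<Sum>i\<in>{0..<n}. w$i * w$i)" unfolding c_def using w by (simp add: scalar_prod_def)
    also have "\<dots> = (\<Sum>i\<in>{0..<n}. u$i * u$i + ((if i = 0 then 1 - 2 * u$i else 0)))"
    proof (rule sum.cong)
      fix i assume "i \<in> {0..<n}"
      thus "w$i * w$i = u$i * u$i + ((if i = 0 then 1 - 2 * u$i else 0))"
        by (cases "i = 0") (simp_all add: wi algebra_simps)
    qed simp
    also have "\<dots> = (\<Sum>i\<in>{0..<n}. u$i * u$i) + (1 - 2 * u$0)"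
      using n by (simp add: sum.distrib)
    also have "(\<Sum>i\<in>{0..<n}. u$i * u$i) = 1" using uu u by (simp add: scalar_prod_def)
    finally show ?thesis by simp
  qed
  define a where "a = 2 / c"
  define H where "H = mat n n (\<lambda>(i,j). (if i = j then 1 else 0) - a * w$i * w$j)"
  have H: "H \<in> carrier_mat n n" unfolding H_def by simp
  have "transpose_mat H * H = 1\<^sub>m n"
  proof (rule eq_matI)
    fix i j assume i: "i < dim_row (1\<^sub>m n)" and j: "j < dim_col (1\<^sub>m n)"
    have "(transpose_mat H * H) $$ (i,j) = (\<Sum>l\<in>{0..<n}. H $$ (l,i) * H $$ (l,j))"
      using i j H by (simp add: scalar_prod_def)
    also have "\<dots> = (\<Sum>l\<in>{0..<n}. ((if l = i then (if i = j then 1 else 0) else 0)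
        - (if l = i then a * w$i * w$j else 0) - (if l = j then a * w$i * w$j else 0))
        + a * a * w$i * w$j * (w$l * w$l))"
    proof (rule sum.cong)
      fix l assume "l \<in> {0..<n}"
      thus "H $$ (l,i) * H $$ (l,j) = ((if l = i then (if i = j then 1 else 0) else 0)
        - (if l = i then a * w$i * w$j else 0) - (if l = j then a * w$i * w$j else 0))
        + a * a * w$i * w$j * (w$l * w$l)" using i j
        by (cases "l = i"; cases "l = j") (simp_all add: H_def algebra_simps)
    qed simp
    also have "\<dots> = (\<Sum>l\<in>{0..<n}. ((if l = i then (if i = j then 1 else 0) else 0)
        - (if l = i then a * w$i * w$j else 0) - (if l = j then a * w$i * w$j else 0)))
        + (\<Sum>l\<in>{0..<n}. a * a * w$i * w$j * (w$l * w$l))"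
      by (rule sum.distrib)
    also have "(\<Sum>l\<in>{0..<n}. a * a * w$i * w$j * (w$l * w$l)) = a * a * w$i * w$j * c"
      unfolding c_def using w by (simp add: scalar_prod_def sum_distrib_left)
    also have "(\<Sum>l\<in>{0..<n}. ((if l = i then (if i = j then 1 else 0) else 0)
        - (if l = i then a * w$i * w$j else 0) - (if l = j then a * w$i * w$j else 0)))
        = (if i = j then 1 else 0) - a * w$i * w$j - a * w$i * w$j"
      using i j by (simp add: sum_subtractf)
    also have "(if i = j then 1 else 0) - a * w$i * w$j - a * w$i * w$j + a * a * w$i * w$j * c = 1\<^sub>m n $$ (i,j)" using i j c0 unfolding a_def by (simp add: field_simps)
    finally show "(transpose_mat H * H) $$ (i,j) = 1\<^sub>m n $$ (i,j)" .
  qed (insert H, auto)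
  moreover have "col H 0 = u"
  proof (rule eq_vecI)
    fix i assume i: "i < dim_vec u"
    hence i: "i < n" using u by simp
    have "a * w$0 = -1" unfolding a_def using wi[OF n] cu c0 by (simp add: field_simps)
    moreover have "col H 0 $ i = (if i = 0 then 1 else 0) - (a * w$0) * w$i"
      using i n unfolding H_def by (simp add: mult.commute mult.left_commute)
    ultimately have "col H 0 $ i = (if i = 0 then 1 else 0) + w$i" by simp
    thus "col H 0 $ i = u $ i" using wi[OF i] by simp
  qed (insert u H n, auto)
  ultimately show ?thesis using H by blast
qed


lemma orth_right:
  fixes H :: "real mat"
  assumes H: "H \<in> carrier_mat n n" and o: "transpose_mat H * H = 1\<^sub>m n"
  shows "H * transpose_mat H = 1\<^sub>m n"
  using mat_mult_left_right_inverse[of "transpose_mat H" n H] H o by simp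

lemma spectral:
  fixes M :: "real mat"
  assumes "M \<in> carrier_mat n n" "transpose_mat M = M"
  shows "\<exists>Q D. Q \<in> carrier_mat n n \<and> transpose_mat Q * Q = 1\<^sub>m n \<and> D \<in> carrier_mat n n
     \<and> diagonal_mat D \<and> M = Q * D * transpose_mat Q"
  using assms
proof (induction n arbitrary: M)
  case 0
  thus ?case by (intro exI[of _ "1\<^sub>m 0"] exI[of _ M], auto simp: diagonal_mat_def)
next
  case (Suc k M)
  let ?n = "Suc k"
  have M: "M \<in> carrier_mat ?n ?n" and S: "transpose_mat M = M" using Suc by auto
  obtain e u where u: "u \<in> carrier_vec ?n" "u \<bullet> u = 1" "M *\<^sub>v u = e \<cdot>\<^sub>v u"
    using real_eigen[OF M S] by auto
  obtain H where H: "H \<in> carrier_mat ?n ?n" and HtH: "transpose_mat H * H = 1\<^sub>m ?n" and Hu: "col H 0 = u"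
    using householder[OF u(1,2)] by auto
  have HHt: "H * transpose_mat H = 1\<^sub>m ?n" using orth_right[OF H HtH] .
  have Ht: "transpose_mat H \<in> carrier_mat ?n ?n" using H by simp
  define A' where "A' = transpose_mat H * M * H"
  have A': "A' \<in> carrier_mat ?n ?n" unfolding A'_def using H M by simp
  have A'S: "transpose_mat A' = A'"
  proof -
    have "transpose_mat (transpose_mat H * M * H) = transpose_mat H * transpose_mat (transpose_mat H * M)"
      using transpose_mult[of "transpose_mat H * M" ?n ?n H ?n] H M by simp
    also have "transpose_mat (transpose_mat H * M) = transpose_mat M * H"
      using transpose_mult[of "transpose_mat H" ?n ?n M ?n] H M by simp
    finally show ?thesis unfolding A'_def using S H M by simp
  qed
  have HtU: "transpose_mat H *\<^sub>v u = unit_vec ?n 0"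
  proof (rule eq_vecI)
    fix i assume "i < dim_vec (unit_vec ?n 0)"
    hence i: "i < ?n" by simp
    have "(transpose_mat H *\<^sub>v u) $ i = (transpose_mat H * H) $$ (i, 0)"
      using i H unfolding Hu[symmetric] by simp
    thus "(transpose_mat H *\<^sub>v u) $ i = unit_vec ?n 0 $ i" using HtH i by (simp add: unit_vec_def)
  qed (insert H, simp)
  have colA': "col A' 0 = e \<cdot>\<^sub>v unit_vec ?n 0"
  proof -
    have "col A' 0 = (transpose_mat H * M) *\<^sub>v col H 0"
      unfolding A'_def using H M col_mult2[of "transpose_mat H * M" ?n ?n H ?n 0] by simp
    also have "\<dots> = transpose_mat H *\<^sub>v (M *\<^sub>v u)" using H M u Hu by simp
    also have "\<dots> = e \<cdot>\<^sub>v (transpose_mat H *\<^sub>v u)" using u H by (simp add: mult_mat_vec)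
    finally show ?thesis using HtU by simp
  qed
  have A'0: "A' $$ (i, 0) = (if i = 0 then e else 0)" if "i < ?n" for i
  proof -
    have "A' $$ (i, 0) = col A' 0 $ i" using that A' by simp
    thus ?thesis using colA' that by (simp add: unit_vec_def)
  qed
  have A'0': "A' $$ (0, j) = (if j = 0 then e else 0)" if "j < ?n" for j
  proof -
    have "A' $$ (0, j) = transpose_mat A' $$ (j, 0)" using that A' by simp
    thus ?thesis using A'S A'0[OF that] by simp
  qed
  obtain A1 A2 A0 A3 where sp: "split_block A' 1 1 = (A1, A2, A0, A3)" by (cases "split_block A' 1 1") auto
  have dims: "dim_row A' = 1 + k" "dim_col A' = 1 + k" using A' by auto
  note spb = split_block[OF sp dims]
  have A3def: "A3 = mat k k (\<lambda>(i,j). A' $$ (i+1, j+1))" 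
    using sp unfolding split_block_def Let_def using dims by auto
  have A2: "A2 = 0\<^sub>m 1 k"
    using sp unfolding split_block_def Let_def using dims A'0' by (auto intro!: eq_matI)
  have A0: "A0 = 0\<^sub>m k 1"
    using sp unfolding split_block_def Let_def using dims A'0 by (auto intro!: eq_matI)
  have A3: "A3 \<in> carrier_mat k k" using spb by simp
  have A1: "A1 \<in> carrier_mat 1 1" using spb by simp
  have A3S: "transpose_mat A3 = A3"
  proof (rule eq_matI)
    fix i j assume "i < dim_row A3" "j < dim_col A3"
    hence ij: "i < k" "j < k" using A3 by auto
    have "A' $$ (j+1, i+1) = transpose_mat A' $$ (i+1, j+1)" using ij A' by simp
    thus "transpose_mat A3 $$ (i, j) = A3 $$ (i, j)" using A'S ij unfolding A3def by simp
  qed (insert A3, auto)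
  obtain Q3 D3 where Q3: "Q3 \<in> carrier_mat k k" "transpose_mat Q3 * Q3 = 1\<^sub>m k"
    and D3: "D3 \<in> carrier_mat k k" "diagonal_mat D3" and A3eq: "A3 = Q3 * D3 * transpose_mat Q3"
    using Suc.IH[OF A3 A3S] by auto
  define P where "P = four_block_mat (1\<^sub>m 1) (0\<^sub>m 1 k) (0\<^sub>m k 1) Q3"
  define D where "D = four_block_mat A1 (0\<^sub>m 1 k) (0\<^sub>m k 1) D3"
  have P: "P \<in> carrier_mat ?n ?n" unfolding P_def using Q3 by (metis four_block_carrier_mat one_carrier_mat plus_1_eq_Suc)
  have D: "D \<in> carrier_mat ?n ?n" unfolding D_def using D3 A1 by (metis four_block_carrier_mat plus_1_eq_Suc)
  have PT: "transpose_mat P = four_block_mat (1\<^sub>m 1) (0\<^sub>m 1 k) (0\<^sub>m k 1) (transpose_mat Q3)"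
    unfolding P_def using Q3 transpose_four_block_mat[of "1\<^sub>m 1" 1 1 "0\<^sub>m 1 k" k "0\<^sub>m k 1" k Q3] by simp
  have PtP: "transpose_mat P * P = 1\<^sub>m ?n"
  proof -
    note PT
    hence "transpose_mat P * P = four_block_mat (1\<^sub>m 1) (0\<^sub>m 1 k) (0\<^sub>m k 1) (transpose_mat Q3 * Q3)"
      unfolding P_def using Q3 by (simp add: mult_four_block_mat[of _ 1 1 _ k _ k _ _ 1 _ k])
    thus ?thesis using Q3 by simp
  qed
  have PDPt: "P * D * transpose_mat P = A'"
  proof -
    note PT
    moreover have "P * D = four_block_mat A1 (0\<^sub>m 1 k) (0\<^sub>m k 1) (Q3 * D3)"
      unfolding P_def D_def using Q3 D3 A1 by (simp add: mult_four_block_mat[of _ 1 1 _ k _ k _ _ 1 _ k])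
    ultimately have "P * D * transpose_mat P = four_block_mat A1 (0\<^sub>m 1 k) (0\<^sub>m k 1) (Q3 * D3 * transpose_mat Q3)"
      using Q3 D3 A1 by (simp add: mult_four_block_mat[of _ 1 1 _ k _ k _ _ 1 _ k])
    thus ?thesis using spb A2 A0 A3eq by simp
  qed
  have Ddiag: "diagonal_mat D"
    unfolding diagonal_mat_def D_def using D3 A1 by (auto simp: diagonal_mat_def)
  define Q where "Q = H * P"
  have Q: "Q \<in> carrier_mat ?n ?n" unfolding Q_def using H P by simp
  have Pt: "transpose_mat P \<in> carrier_mat ?n ?n" using P by simp
  have "transpose_mat Q * Q = transpose_mat P * (transpose_mat H * H) * P"
    unfolding Q_def using H P by (simp add: transpose_mult[of _ ?n ?n] assoc_mult_mat[of _ ?n ?n _ ?n _ ?n])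
  hence QtQ: "transpose_mat Q * Q = 1\<^sub>m ?n" using HtH PtP P by simp
  have "Q * D * transpose_mat Q = H * (P * D * transpose_mat P) * transpose_mat H"
    unfolding Q_def using H P D by (simp add: transpose_mult[of _ ?n ?n] assoc_mult_mat[of _ ?n ?n _ ?n _ ?n])
  also have "\<dots> = (H * transpose_mat H) * M * (H * transpose_mat H)"
    unfolding PDPt A'_def using H M by (simp add: assoc_mult_mat[of _ ?n ?n _ ?n _ ?n])
  also have "\<dots> = M" using HHt M by simp
  finally show ?case using Q QtQ D Ddiag by metis
qed


definition tr :: "real mat \<Rightarrow> real" where "tr M = (\<Sum>i<dim_row M. M$$(i,i))"
definition fip :: "real mat \<Rightarrow> real mat \<Rightarrow> real" where
  "fip U V = (\<Sum>i<dim_row U. \<Sum>j<dim_col U. U$$(i,j) * V$$(i,j))"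

lemma tr_comm:
  assumes U: "U \<in> carrier_mat a b" and V: "V \<in> carrier_mat b a"
  shows "tr (U * V) = tr (V * U)"
proof -
  have "tr (U * V) = (\<Sum>i<a. \<Sum>l<b. U$$(i,l) * V$$(l,i))"
    unfolding tr_def using U V by (simp add: scalar_prod_def lessThan_atLeast0)
  also have "\<dots> = (\<Sum>l<b. \<Sum>i<a. V$$(l,i) * U$$(i,l))"
    by (subst sum.swap) (simp add: mult.commute)
  also have "\<dots> = tr (V * U)"
    unfolding tr_def using U V by (simp add: scalar_prod_def lessThan_atLeast0)
  finally show ?thesis .
qed

lemma fip_tr:
  assumes U: "U \<in> carrier_mat m n" and V: "V \<in> carrier_mat m n"
  shows "fip U V = tr (transpose_mat U * V)"
proof -
  have "tr (transpose_mat U * V) = (\<Sum>j<n. \<Sum>i<m. U$$(i,j) * V$$(i,j))"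
    unfolding tr_def using U V by (simp add: scalar_prod_def lessThan_atLeast0)
  also have "\<dots> = fip U V" unfolding fip_def using U by (subst sum.swap) simp
  finally show ?thesis by simp
qed

lemma fip_orth:
  assumes L: "L \<in> carrier_mat m m" "transpose_mat L * L = 1\<^sub>m m"
    and R: "R \<in> carrier_mat n n" "transpose_mat R * R = 1\<^sub>m n"
    and U: "U \<in> carrier_mat m n" and V: "V \<in> carrier_mat m n"
  shows "fip (L * U * transpose_mat R) (L * V * transpose_mat R) = fip U V"
proof -
  have RRt: "R * transpose_mat R = 1\<^sub>m n" using orth_right R by blast
  have "fip (L * U * transpose_mat R) (L * V * transpose_mat R)
     = tr (transpose_mat (L * U * transpose_mat R) * (L * V * transpose_mat R))"
    using L R U V by (intro fip_tr[of _ m n]) auto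
  also have "transpose_mat (L * U * transpose_mat R) = R * transpose_mat U * transpose_mat L"
  proof -
    have "transpose_mat (L * U * transpose_mat R) = R * (transpose_mat U * transpose_mat L)"
      using transpose_mult[of "L*U" m n "transpose_mat R" n] transpose_mult[of L m m U n] L R U by simp
    thus ?thesis using L R U by (simp add: assoc_mult_mat[of _ n n _ n _ m])
  qed
  also have "R * transpose_mat U * transpose_mat L * (L * V * transpose_mat R)
     = R * (transpose_mat U * V * transpose_mat R)"
  proof -
    have Ut: "transpose_mat U \<in> carrier_mat n m" and Lt: "transpose_mat L \<in> carrier_mat m m"
      and Rt: "transpose_mat R \<in> carrier_mat n n" using U L R by auto
    have VR: "V * transpose_mat R \<in> carrier_mat m n" using V Rt by simp
    have e1: "R * transpose_mat U * transpose_mat L = R * (transpose_mat U * transpose_mat L)"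
      using assoc_mult_mat[OF R(1) Ut Lt] .
    have e2: "L * V * transpose_mat R = L * (V * transpose_mat R)" using assoc_mult_mat[OF L(1) V Rt] .
    have e3: "R * (transpose_mat U * transpose_mat L) * (L * (V * transpose_mat R))
       = R * ((transpose_mat U * transpose_mat L) * (L * (V * transpose_mat R)))"
      using assoc_mult_mat[of R n n "transpose_mat U * transpose_mat L" m "L * (V * transpose_mat R)" n] R Ut Lt L VR by simp
    have e4: "(transpose_mat U * transpose_mat L) * (L * (V * transpose_mat R))
       = transpose_mat U * (transpose_mat L * (L * (V * transpose_mat R)))"
      using assoc_mult_mat[of "transpose_mat U" n m "transpose_mat L" m "L * (V * transpose_mat R)" n] Ut Lt L VR by simp
    have e5: "transpose_mat L * (L * (V * transpose_mat R)) = V * transpose_mat R"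
      using assoc_mult_mat[OF Lt L(1) VR, symmetric] L left_mult_one_mat[OF VR] by simp
    have e6: "R * (transpose_mat U * V * transpose_mat R) = R * (transpose_mat U * (V * transpose_mat R))"
      using assoc_mult_mat[OF Ut V Rt] by simp
    show ?thesis unfolding e1 e2 e3 e4 e5 e6 ..
  qed
  also have "tr (R * (transpose_mat U * V * transpose_mat R)) = tr ((transpose_mat U * V * transpose_mat R) * R)"
    using R U V by (intro tr_comm[of _ n n]) auto
  also have "(transpose_mat U * V * transpose_mat R) * R = transpose_mat U * V"
    using R U V by (simp add: assoc_mult_mat[of _ n n _ n _ n] assoc_mult_mat[of _ n m _ n _ n])
  also have "tr (transpose_mat U * V) = fip U V" using fip_tr[OF U V] by simp
  finally show ?thesis .
qed

lemma fip_diag: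
  assumes U: "U \<in> carrier_mat m n" and D: "diagonal_mat U"
  shows "fip U V = (\<Sum>i<min m n. U$$(i,i) * V$$(i,i))"
proof -
  have "fip U V = (\<Sum>i<m. \<Sum>j<n. if j = i then U$$(i,i) * V$$(i,i) else 0)"
    unfolding fip_def using U D by (intro sum.cong refl, auto simp: diagonal_mat_def)
  also have "\<dots> = (\<Sum>i<m. if i < n then U$$(i,i) * V$$(i,i) else 0)"
    by (simp add: sum.delta)
  also have "\<dots> = (\<Sum>i\<in>{..<m} \<inter> {..<n}. U$$(i,i) * V$$(i,i))"
    by (simp add: sum.inter_restrict)
  also have "{..<m} \<inter> {..<n} = {..<min m n}" by auto
  finally show ?thesis .
qed

lemma frob_sq:
  assumes U: "U \<in> carrier_mat m n"
  shows "(frob_norm U)\<^sup>2 = fip U U"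
proof -
  have "(\<Sum>i<dim_row U. \<Sum>j<dim_col U. (U $$ (i,j))\<^sup>2) \<ge> 0" by (intro sum_nonneg) auto
  thus ?thesis unfolding frob_norm_def fip_def by (simp add: power2_eq_square)
qed

lemma cs_vec:
  fixes x y :: "real vec"
  assumes "x \<in> carrier_vec n" "y \<in> carrier_vec n"
  shows "x \<bullet> y \<le> sqrt (x \<bullet> x) * sqrt (y \<bullet> y)"
proof -
  have "x \<bullet> y = (\<Sum>i\<in>{0..<n}. x$i * y$i)" using assms by (simp add: scalar_prod_def)
  also have "\<dots> \<le> (\<Sum>i\<in>{0..<n}. \<bar>x$i\<bar> * \<bar>y$i\<bar>)"
    by (intro sum_mono) (metis abs_ge_self abs_mult)
  also have "\<dots> \<le> L2_set (\<lambda>i. x$i) {0..<n} * L2_set (\<lambda>i. y$i) {0..<n}" by (rule L2_set_mult_ineq)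
  also have "\<dots> = sqrt (x \<bullet> x) * sqrt (y \<bullet> y)"
    unfolding L2_set_def using assms by (simp add: scalar_prod_def power2_eq_square)
  finally show ?thesis .
qed

lemma orth_norm:
  fixes L :: "real mat"
  assumes L: "L \<in> carrier_mat m m" "transpose_mat L * L = 1\<^sub>m m" and x: "x \<in> carrier_vec m"
  shows "(L *\<^sub>v x) \<bullet> (L *\<^sub>v x) = x \<bullet> x"
proof -
  have "(L *\<^sub>v x) \<bullet> (L *\<^sub>v x) = (transpose_mat L *\<^sub>v (L *\<^sub>v x)) \<bullet> x"
    using transpose_vec_mult_scalar[of L m m x "L *\<^sub>v x"] L x by simp
  also have "transpose_mat L *\<^sub>v (L *\<^sub>v x) = x" using L x
    by (metis assoc_mult_mat_vec one_mult_mat_vec transpose_carrier_mat)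
  finally show ?thesis .
qed

lemma diag_quad_bound:
  fixes E :: "real mat"
  assumes E: "E \<in> carrier_mat m n" and D: "diagonal_mat E" and c: "\<And>i. i < min m n \<Longrightarrow> \<bar>E$$(i,i)\<bar> \<le> c"
    and v: "v \<in> carrier_vec n"
  shows "(E *\<^sub>v v) \<bullet> (E *\<^sub>v v) \<le> c\<^sup>2 * (v \<bullet> v)"
proof -
  have Ev: "(E *\<^sub>v v)$i = (if i < n then E$$(i,i) * v$i else 0)" if i: "i < m" for i
  proof -
    have "(E *\<^sub>v v)$i = (\<Sum>l\<in>{0..<n}. E$$(i,l) * v$l)" using i E v by (simp add: scalar_prod_def)
    also have "\<dots> = (\<Sum>l\<in>{0..<n}. if l = i then E$$(i,i) * v$i else 0)"
      using D E i by (intro sum.cong) (auto simp: diagonal_mat_def)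
    finally show ?thesis by (simp add: sum.delta)
  qed
  have "(E *\<^sub>v v) \<bullet> (E *\<^sub>v v) = (\<Sum>i<m. (if i < n then (E$$(i,i))\<^sup>2 * (v$i)\<^sup>2 else 0))"
    unfolding scalar_prod_def using E by (auto simp: lessThan_atLeast0 Ev power2_eq_square simp del: index_mult_mat_vec intro!: sum.cong)
  also have "\<dots> \<le> (\<Sum>i<m. (if i < n then c\<^sup>2 * (v$i)\<^sup>2 else 0))"
  proof (intro sum_mono)
    fix i assume i: "i \<in> {..<m}"
    show "(if i < n then (E$$(i,i))\<^sup>2 * (v$i)\<^sup>2 else 0) \<le> (if i < n then c\<^sup>2 * (v$i)\<^sup>2 else 0)"
    proof (cases "i < n")
      case True
      hence "\<bar>E$$(i,i)\<bar> \<le> c" using c i by simp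
      hence "\<bar>E$$(i,i)\<bar>\<^sup>2 \<le> c\<^sup>2" by (intro power_mono) auto
      hence "(E$$(i,i))\<^sup>2 \<le> c\<^sup>2" by simp
      thus ?thesis using True by (simp add: mult_right_mono)
    qed simp
  qed
  also have "\<dots> = (\<Sum>i\<in>{..<m} \<inter> {..<n}. c\<^sup>2 * (v$i)\<^sup>2)" by (simp add: sum.inter_restrict)
  also have "\<dots> \<le> (\<Sum>i<n. c\<^sup>2 * (v$i)\<^sup>2)" by (intro sum_mono2) auto
  also have "\<dots> = c\<^sup>2 * (v \<bullet> v)" using v
    by (simp add: scalar_prod_def lessThan_atLeast0 sum_distrib_left power2_eq_square)
  finally show ?thesis .
qed


lemma sum_mset_mset_map: "(\<Sum>x\<in>#mset xs. f x) = sum_list (map f xs)"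
  by (induction xs) auto

lemma mset_sum_singletons: "sum_list (map (\<lambda>a. {#a#}) xs) = mset xs"
  by (induction xs) auto

lemma proots_decomp:
  fixes N :: "real mat"
  assumes N: "N \<in> carrier_mat n n" and Q: "Q \<in> carrier_mat n n" "transpose_mat Q * Q = 1\<^sub>m n"
    and D: "D \<in> carrier_mat n n" "diagonal_mat D" and eq: "N = Q * D * transpose_mat Q"
  shows "proots (char_poly N) = mset (diag_mat D)"
proof -
  have "similar_mat N D"
    by (rule similar_matI[of N D Q "transpose_mat Q" n], insert N Q D eq orth_right[OF Q], auto)
  hence "char_poly N = char_poly D" by (rule char_poly_similar)
  also have "\<dots> = (\<Prod>a\<leftarrow>diag_mat D. [:- a, 1:])"
    by (rule char_poly_upper_triangular[OF D(1)], insert D, auto simp: upper_triangular_def diagonal_mat_def)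
  finally have cp: "char_poly N = (\<Prod>a\<leftarrow>diag_mat D. [:- a, 1:])" .
  have "proots (\<Prod>a\<leftarrow>diag_mat D. [:- a, 1:]) = sum_list (map proots (map (\<lambda>a. [:- a, 1:]) (diag_mat D)))"
  proof -
    have "0 \<notin> (\<lambda>a. [:- a, 1:]) ` set (diag_mat D)" by auto
    thus ?thesis using proots_prod_list[of "map (\<lambda>a. [:- a, 1:]) (diag_mat D)"] by simp
  qed
  also have "\<dots> = sum_list (map (\<lambda>a. {#a#}) (diag_mat D))"
    by (simp add: comp_def)
  finally show ?thesis using cp mset_sum_singletons by simp
qed

lemma nuc_decomp:
  fixes A :: "real mat"
  assumes A: "A \<in> carrier_mat m n" and Q: "Q \<in> carrier_mat n n" "transpose_mat Q * Q = 1\<^sub>m n"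
    and D: "D \<in> carrier_mat n n" "diagonal_mat D" and eq: "transpose_mat A * A = Q * D * transpose_mat Q"
  shows "nuc_norm A = (\<Sum>i<n. sqrt (D$$(i,i)))"
proof -
  have "proots (char_poly (transpose_mat A * A)) = mset (diag_mat D)"
    using proots_decomp[OF _ Q D eq] A by simp
  hence "nuc_norm A = sum_list (map sqrt (diag_mat D))"
    unfolding nuc_norm_def by (simp add: sum_mset_mset_map)
  also have "\<dots> = (\<Sum>i<n. sqrt (D$$(i,i)))"
    unfolding diag_mat_def using D by (simp add: sum_set_upt_conv_sum_list_nat[symmetric] comp_def lessThan_atLeast0)
  finally show ?thesis .
qed


lemma diag_gram:
  fixes U :: "real mat"
  assumes U: "U \<in> carrier_mat m n" and D: "diagonal_mat U"
  shows "transpose_mat U * U \<in> carrier_mat n n" "diagonal_mat (transpose_mat U * U)"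
    "\<And>j. j < n \<Longrightarrow> (transpose_mat U * U) $$ (j,j) = (if j < m then (U$$(j,j))\<^sup>2 else 0)"
proof -
  have ent: "(transpose_mat U * U) $$ (i,j) = (if i < m then U$$(i,i) * U$$(i,j) else 0)"
    if i: "i < n" and j: "j < n" for i j
  proof -
    have "(transpose_mat U * U) $$ (i,j) = (\<Sum>l\<in>{0..<m}. U$$(l,i) * U$$(l,j))"
      using i j U by (simp add: scalar_prod_def)
    also have "\<dots> = (\<Sum>l\<in>{0..<m}. if l = i then U$$(i,i) * U$$(i,j) else 0)"
      using D U i by (intro sum.cong) (auto simp: diagonal_mat_def)
    finally show ?thesis by (simp add: sum.delta)
  qed
  show "transpose_mat U * U \<in> carrier_mat n n" using U by simp
  show "diagonal_mat (transpose_mat U * U)"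
    unfolding diagonal_mat_def using U D ent by (auto simp: diagonal_mat_def)
  show "\<And>j. j < n \<Longrightarrow> (transpose_mat U * U) $$ (j,j) = (if j < m then (U$$(j,j))\<^sup>2 else 0)"
    using ent by (simp add: power2_eq_square)
qed

lemma sym_gram: "(A :: real mat) \<in> carrier_mat m n \<Longrightarrow> transpose_mat (transpose_mat A * A) = transpose_mat A * A"
  using transpose_mult[of "transpose_mat A" n m A n] by simp

lemma fip_bound:
  fixes L R E A :: "real mat"
  assumes L: "L \<in> carrier_mat m m" "transpose_mat L * L = 1\<^sub>m m"
    and R: "R \<in> carrier_mat n n" "transpose_mat R * R = 1\<^sub>m n"
    and E: "E \<in> carrier_mat m n" "diagonal_mat E" and c: "\<And>i. i < min m n \<Longrightarrow> \<bar>E$$(i,i)\<bar> \<le> c"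
    and c0: "0 \<le> c" and A: "A \<in> carrier_mat m n"
  shows "fip (L * E * transpose_mat R) A \<le> c * nuc_norm A"
proof -
  obtain Q D where Q: "Q \<in> carrier_mat n n" "transpose_mat Q * Q = 1\<^sub>m n"
    and D: "D \<in> carrier_mat n n" "diagonal_mat D" and AA: "transpose_mat A * A = Q * D * transpose_mat Q"
    using spectral[of "transpose_mat A * A" n] A sym_gram[OF A] by auto
  have nuc: "nuc_norm A = (\<Sum>j<n. sqrt (D$$(j,j)))" using nuc_decomp[OF A Q D AA] .
  have QQt: "Q * transpose_mat Q = 1\<^sub>m n" using orth_right[OF Q] .
  have RRt: "R * transpose_mat R = 1\<^sub>m n" using orth_right[OF R] .
  define W where "W = L * E * transpose_mat R"
  have W: "W \<in> carrier_mat m n" unfolding W_def using L E R by simp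
  define G where "G = W * Q"
  define K where "K = A * Q"
  have G: "G \<in> carrier_mat m n" unfolding G_def using W Q by simp
  have K: "K \<in> carrier_mat m n" unfolding K_def using A Q by simp
  have Wt: "transpose_mat W \<in> carrier_mat n m" using W by simp
  have Qt: "transpose_mat Q \<in> carrier_mat n n" using Q by simp
  have "fip W A = tr (transpose_mat W * A)" using fip_tr[OF W A] .
  also have "transpose_mat W * A = (transpose_mat W * A * Q) * transpose_mat Q"
    using Wt A Q Qt QQt by (simp add: assoc_mult_mat[of _ n m _ n _ n])
  also have "tr \<dots> = tr (transpose_mat Q * (transpose_mat W * A * Q))"
    using Wt A Q by (intro tr_comm[of _ n n]) auto
  also have "transpose_mat Q * (transpose_mat W * A * Q) = transpose_mat G * K"
  proof -
    have "transpose_mat G = transpose_mat Q * transpose_mat W"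
      unfolding G_def using transpose_mult[OF W Q(1)] .
    thus ?thesis unfolding K_def using Wt A Q Qt
      by (simp add: assoc_mult_mat[of _ n n _ m _ n] assoc_mult_mat[of _ n m _ n _ n])
  qed
  also have "tr (transpose_mat G * K) = (\<Sum>j<n. col G j \<bullet> col K j)"
    unfolding tr_def using G K by simp
  also have "\<dots> \<le> (\<Sum>j<n. c * sqrt (D$$(j,j)))"
  proof (rule sum_mono)
    fix j assume j: "j \<in> {..<n}"
    hence j: "j < n" by simp
    define q where "q = col Q j"
    have q: "q \<in> carrier_vec n" unfolding q_def using Q j by simp
    have qq: "q \<bullet> q = 1"
    proof -
      have "(transpose_mat Q * Q) $$ (j,j) = q \<bullet> q" unfolding q_def using Q(1) j by simp
      moreover have "(transpose_mat Q * Q) $$ (j,j) = 1" unfolding Q(2) using j by simp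
      ultimately show ?thesis by simp
    qed
    have KK: "col K j \<bullet> col K j = D$$(j,j)"
    proof -
      have "col K j \<bullet> col K j = (transpose_mat K * K) $$ (j,j)" using K j by simp
      also have "transpose_mat K * K = transpose_mat Q * (transpose_mat A * A) * Q"
        unfolding K_def using A Q transpose_mult[OF A Q(1)]
        by (simp add: assoc_mult_mat[of _ n n _ n _ n] assoc_mult_mat[of _ n n _ m _ n] assoc_mult_mat[of _ n m _ n _ n])
      also have "\<dots> = (transpose_mat Q * Q) * D * (transpose_mat Q * Q)"
        unfolding AA using Q(1) D by (simp add: assoc_mult_mat[of _ n n _ n _ n])
      also have "\<dots> = D" unfolding Q(2) using D by simp
      finally show ?thesis .
    qed
    have GG: "col G j \<bullet> col G j \<le> c\<^sup>2"
    proof -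
      have Rq: "transpose_mat R *\<^sub>v q \<in> carrier_vec n" using R q by simp
      have EIq: "E *\<^sub>v (transpose_mat R *\<^sub>v q) \<in> carrier_vec m" using E Rq by simp
      have "col G j = W *\<^sub>v q" unfolding G_def q_def using col_mult2[OF W Q(1) j] .
      also have "\<dots> = L *\<^sub>v (E *\<^sub>v (transpose_mat R *\<^sub>v q))"
        unfolding W_def using L(1) E(1) R(1) q
        by (simp add: assoc_mult_mat_vec[of _ m m _ n] assoc_mult_mat_vec[of _ m n _ n] assoc_mult_mat[of L m m E n _ n])
      finally have "col G j \<bullet> col G j = (E *\<^sub>v (transpose_mat R *\<^sub>v q)) \<bullet> (E *\<^sub>v (transpose_mat R *\<^sub>v q))"
        using orth_norm[OF L EIq] by simp
      also have "\<dots> \<le> c\<^sup>2 * ((transpose_mat R *\<^sub>v q) \<bullet> (transpose_mat R *\<^sub>v q))"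
        using diag_quad_bound[OF E c Rq] by simp
      also have "(transpose_mat R *\<^sub>v q) \<bullet> (transpose_mat R *\<^sub>v q) = q \<bullet> q"
        using orth_norm[of "transpose_mat R" n q] R RRt q by simp
      finally show ?thesis using qq by simp
    qed
    have "col G j \<bullet> col K j \<le> sqrt (col G j \<bullet> col G j) * sqrt (col K j \<bullet> col K j)"
      using cs_vec[of "col G j" m "col K j"] G K j by simp
    also have "\<dots> \<le> c * sqrt (D$$(j,j))"
    proof -
      have "sqrt (col G j \<bullet> col G j) \<le> sqrt (c\<^sup>2)" using GG by (rule real_sqrt_le_mono)
      hence "sqrt (col G j \<bullet> col G j) \<le> c" using c0 by simp
      moreover have "0 \<le> D$$(j,j)" using KK rsq_ge0[of "col K j"] by simp
      ultimately show ?thesis unfolding KK by (intro mult_right_mono) simp_all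
    qed
    finally show "col G j \<bullet> col K j \<le> c * sqrt (D$$(j,j))" .
  qed
  also have "\<dots> = c * nuc_norm A" unfolding nuc by (simp add: sum_distrib_left)
  finally show ?thesis unfolding W_def .
qed


lemma gram_orth:
  fixes L R U :: "real mat"
  assumes L: "L \<in> carrier_mat m m" "transpose_mat L * L = 1\<^sub>m m"
    and R: "R \<in> carrier_mat n n" and U: "U \<in> carrier_mat m n"
  shows "transpose_mat (L * U * transpose_mat R) * (L * U * transpose_mat R)
     = R * (transpose_mat U * U) * transpose_mat R"
proof -
  have Ut: "transpose_mat U \<in> carrier_mat n m" and Lt: "transpose_mat L \<in> carrier_mat m m"
    and Rt: "transpose_mat R \<in> carrier_mat n n" using U L R by auto
  have UR: "U * transpose_mat R \<in> carrier_mat m n" using U Rt by simp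
  have t: "transpose_mat (L * U * transpose_mat R) = R * (transpose_mat U * transpose_mat L)"
    using transpose_mult[of "L*U" m n "transpose_mat R" n] transpose_mult[of L m m U n] L R U by simp
  have e2: "L * U * transpose_mat R = L * (U * transpose_mat R)" using assoc_mult_mat[OF L(1) U Rt] .
  have e3: "R * (transpose_mat U * transpose_mat L) * (L * (U * transpose_mat R))
     = R * ((transpose_mat U * transpose_mat L) * (L * (U * transpose_mat R)))"
    using assoc_mult_mat[of R n n "transpose_mat U * transpose_mat L" m "L * (U * transpose_mat R)" n] R Ut Lt L UR by simp
  have e4: "(transpose_mat U * transpose_mat L) * (L * (U * transpose_mat R))
     = transpose_mat U * (transpose_mat L * (L * (U * transpose_mat R)))"
    using assoc_mult_mat[of "transpose_mat U" n m "transpose_mat L" m "L * (U * transpose_mat R)" n] Ut Lt L UR by simp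
  have e5: "transpose_mat L * (L * (U * transpose_mat R)) = U * transpose_mat R"
    using assoc_mult_mat[OF Lt L(1) UR, symmetric] L left_mult_one_mat[OF UR] by simp
  have e6: "R * (transpose_mat U * U) * transpose_mat R = R * (transpose_mat U * (U * transpose_mat R))"
    using assoc_mult_mat[OF R Ut U] assoc_mult_mat[OF Ut U Rt] assoc_mult_mat[of R n n "transpose_mat U * U" n "transpose_mat R" n] R Ut U Rt
    by simp
  have "transpose_mat (L * U * transpose_mat R) * (L * U * transpose_mat R)
     = R * (transpose_mat U * transpose_mat L) * (L * (U * transpose_mat R))"
    unfolding t by (simp only: e2)
  also have "\<dots> = R * (transpose_mat U * (U * transpose_mat R))" by (simp only: e3 e4 e5)
  finally show ?thesis using e6 by simp
qed

lemma fip_expand: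
  fixes X A B :: "real mat"
  assumes X: "X \<in> carrier_mat m n" and A: "A \<in> carrier_mat m n" and B: "B \<in> carrier_mat m n"
  shows "fip (X - A) (X - A) = fip (X - B) (X - B) + 2 * (fip (X - B) B - fip (X - B) A) + fip (B - A) (B - A)"
proof -
  have "fip (X - A) (X - A) = (\<Sum>i<m. \<Sum>j<n. (X$$(i,j) - A$$(i,j)) * (X$$(i,j) - A$$(i,j)))"
    unfolding fip_def using X A by simp
  also have "\<dots> = (\<Sum>i<m. \<Sum>j<n. (X$$(i,j) - B$$(i,j)) * (X$$(i,j) - B$$(i,j))
      + (2 * ((X$$(i,j) - B$$(i,j)) * B$$(i,j)) - 2 * ((X$$(i,j) - B$$(i,j)) * A$$(i,j)))
      + (B$$(i,j) - A$$(i,j)) * (B$$(i,j) - A$$(i,j)))"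
    by (intro sum.cong refl) (simp add: algebra_simps)
  also have "\<dots> = (\<Sum>i<m. \<Sum>j<n. (X$$(i,j) - B$$(i,j)) * (X$$(i,j) - B$$(i,j)))
      + (2 * (\<Sum>i<m. \<Sum>j<n. (X$$(i,j) - B$$(i,j)) * B$$(i,j)) - 2 * (\<Sum>i<m. \<Sum>j<n. (X$$(i,j) - B$$(i,j)) * A$$(i,j)))
      + (\<Sum>i<m. \<Sum>j<n. (B$$(i,j) - A$$(i,j)) * (B$$(i,j) - A$$(i,j)))"
    by (simp only: sum.distrib sum_subtractf sum_distrib_left)
  also have "\<dots> = fip (X - B) (X - B) + 2 * (fip (X - B) B - fip (X - B) A) + fip (B - A) (B - A)"
    unfolding fip_def using X A B by (simp add: right_diff_distrib)
  finally show ?thesis .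
qed

lemma fip_pos:
  fixes A B :: "real mat"
  assumes A: "A \<in> carrier_mat m n" and B: "B \<in> carrier_mat m n" and ne: "A \<noteq> B"
  shows "fip (B - A) (B - A) > 0"
proof -
  obtain i j where ij: "i < m" "j < n" "A$$(i,j) \<noteq> B$$(i,j)"
    using ne A B by (metis carrier_matD eq_matI)
  have "0 < (B$$(i,j) - A$$(i,j)) * (B$$(i,j) - A$$(i,j))" using ij by (auto simp: zero_less_mult_iff)
  also have "\<dots> \<le> (\<Sum>j'<n. (B$$(i,j') - A$$(i,j')) * (B$$(i,j') - A$$(i,j')))"
    using ij by (intro member_le_sum) auto
  also have "\<dots> \<le> (\<Sum>i'<m. \<Sum>j'<n. (B$$(i',j') - A$$(i',j')) * (B$$(i',j') - A$$(i',j')))"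
    using ij by (intro member_le_sum sum_nonneg) auto
  also have "\<dots> = fip (B - A) (B - A)" unfolding fip_def using A B by simp
  finally show ?thesis .
qed


lemma lin_aux:
  fixes F x y z w q v h c :: real
  assumes "F \<le> x" "x = y" "z = w" "0 \<le> q" "q = w - 2 * y + v" "0 < h"
  shows "c + w < c + 2 * (z - F) + h + v"
  using assms by simp

theorem theorem4:
  fixes m n :: nat and p :: real and X L S R :: "real mat"
  assumes "0 < p" and "p < 1"
    and "is_svd m n X L S R"
    and "X \<noteq> 0\<^sub>m m n"
  shows "L * soft_thr_diag (mu_thr p m n S) S * transpose_mat R \<in> carrier_mat m n \<and>
         (\<forall>A \<in> carrier_mat m n. A \<noteq> L * soft_thr_diag (mu_thr p m n S) S * transpose_mat R \<longrightarrow>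
            (frob_norm (X - L * soft_thr_diag (mu_thr p m n S) S * transpose_mat R))\<^sup>2
              + (1 - p) / p * (nuc_norm (L * soft_thr_diag (mu_thr p m n S) S * transpose_mat R))\<^sup>2
            < (frob_norm (X - A))\<^sup>2 + (1 - p) / p * (nuc_norm A)\<^sup>2)"
proof -
  note p0 = assms(1) and p1 = assms(2)
  from assms(3) have X: "X \<in> carrier_mat m n" and Lo: "orth_mat m L" and Ro: "orth_mat n R"
    and S: "S \<in> carrier_mat m n" and Sd: "diagonal_mat S"
    and Snn: "\<forall>i<min m n. 0 \<le> S$$(i,i)"
    and Smono: "\<forall>i j. i \<le> j \<longrightarrow> j < min m n \<longrightarrow> S$$(j,j) \<le> S$$(i,i)"
    and Xeq: "X = L * S * transpose_mat R" unfolding is_svd_def by auto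
  have L: "L \<in> carrier_mat m m" "transpose_mat L * L = 1\<^sub>m m" using Lo unfolding orth_mat_def by auto
  have R: "R \<in> carrier_mat n n" "transpose_mat R * R = 1\<^sub>m n" using Ro unfolding orth_mat_def by auto
  define k where "k = min m n"
  define \<sigma> where "\<sigma> i = S$$(i,i)" for i
  have snn: "\<And>i. i < k \<Longrightarrow> 0 \<le> \<sigma> i" using Snn unfolding k_def \<sigma>_def by auto
  have smono: "\<And>i j. i \<le> j \<Longrightarrow> j < k \<Longrightarrow> \<sigma> j \<le> \<sigma> i" using Smono unfolding k_def \<sigma>_def by auto
  have svS: "sv S (Suc i) = \<sigma> i" for i unfolding sv_def \<sigma>_def by simp
  have sumconv: "(\<Sum>i=1..j. sv S i) = (\<Sum>i<j. \<sigma> i)" for j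
    using sum.atLeast1_atMost_eq[of "sv S" j] by (simp add: svS)
  have "\<exists>i<k. \<sigma> i \<noteq> 0"
  proof (rule ccontr)
    assume "\<not> (\<exists>i<k. \<sigma> i \<noteq> 0)"
    hence z: "\<And>i. i < k \<Longrightarrow> \<sigma> i = 0" by auto
    have "S = 0\<^sub>m m n"
    proof (rule eq_matI)
      fix i j assume "i < dim_row (0\<^sub>m m n)" "j < dim_col (0\<^sub>m m n)"
      hence ij: "i < m" "j < n" by auto
      show "S $$ (i,j) = 0\<^sub>m m n $$ (i,j)"
      proof (cases "i = j")
        case True thus ?thesis using z[of i] ij unfolding \<sigma>_def k_def by simp
      next
        case False thus ?thesis using Sd S ij unfolding diagonal_mat_def by auto
      qed
    qed (insert S, auto)
    hence "X = 0\<^sub>m m n" unfolding Xeq using L R 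
      by (simp add: right_mult_zero_mat[of L m m n] left_mult_zero_mat[of "transpose_mat R" n n m])
    thus False using assms(4) by simp
  qed
  then obtain i0 where i0: "i0 < k" "\<sigma> i0 \<noteq> 0" by auto
  have k0: "0 < k" using i0 by simp
  have s0: "\<sigma> 0 > 0" using smono[of 0 i0] snn[of i0] i0 by simp
  define P where "P = (\<lambda>d::nat. 1 \<le> d \<and> d \<le> min m n \<and>
      sv S d > (1 - p) / (p + (1 - p) * real d) * (\<Sum>i=1..d. sv S i))"
  define d where "d = d_bar p m n S"
  have dP: "d = Greatest P" unfolding d_def d_bar_def P_def by simp
  have P1: "P 1"
  proof -
    have "(1 - p) * \<sigma> 0 < \<sigma> 0" using s0 p0 by (simp add: algebra_simps)
    thus ?thesis unfolding P_def using k0 unfolding k_def by (simp add: sumconv svS[of 0, simplified])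
  qed
  have Pb: "\<forall>y. P y \<longrightarrow> y \<le> k" unfolding P_def k_def by auto
  have Pd: "P d" unfolding dP using GreatestI_nat[of P 1 k] P1 Pb by blast
  have Pmax: "\<And>j. P j \<Longrightarrow> j \<le> d" unfolding dP using Greatest_le_nat[of P _ k] Pb by blast
  define Sd where "Sd = (\<Sum>i<d. \<sigma> i)"
  define \<mu> where "\<mu> = mu_thr p m n S"
  have den: "p + (1 - p) * real d > 0" using p0 p1 by (simp add: add_pos_nonneg)
  have mu_def': "\<mu> = (1 - p) / (p + (1 - p) * real d) * Sd"
    unfolding \<mu>_def mu_thr_def Let_def d_def[symmetric] Sd_def sumconv ..
  have mu_eq: "\<mu> * (p + (1 - p) * real d) = (1 - p) * Sd" unfolding mu_def' using den by simp
  have d1: "1 \<le> d" and dk: "d \<le> k" and sd: "\<sigma> (d - 1) > \<mu>"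
  proof -
    show "1 \<le> d" "d \<le> k" using Pd unfolding P_def k_def by auto
    have "sv S d > \<mu>" using Pd unfolding P_def mu_def' Sd_def sumconv by auto
    moreover have "sv S d = \<sigma> (d - 1)" using \<open>1 \<le> d\<close> svS[of "d - 1"] by simp
    ultimately show "\<sigma> (d - 1) > \<mu>" by simp
  qed
  have F1: "\<And>i. i < d \<Longrightarrow> \<sigma> i > \<mu>"
  proof -
    fix i assume "i < d"
    hence "\<sigma> (d - 1) \<le> \<sigma> i" using smono[of i "d - 1"] dk d1 by simp
    thus "\<sigma> i > \<mu>" using sd by simp
  qed
  have F2: "\<And>i. d \<le> i \<Longrightarrow> i < k \<Longrightarrow> \<sigma> i \<le> \<mu>"
  proof -
    fix i assume i: "d \<le> i" "i < k"
    have "\<not> P (Suc d)" using Pmax[of "Suc d"] by auto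
    hence "\<not> (\<sigma> d > (1 - p) / (p + (1 - p) * real (Suc d)) * (Sd + \<sigma> d))"
      using i d1 unfolding P_def k_def Sd_def sumconv by (auto simp: svS)
    hence le: "\<sigma> d \<le> (1 - p) / (p + (1 - p) * real (Suc d)) * (Sd + \<sigma> d)" by simp
    have den2: "p + (1 - p) * real (Suc d) > 0" using p0 p1 by (simp add: add_pos_nonneg)
    have "\<sigma> d * (p + (1 - p) * real (Suc d)) \<le> (1 - p) * (Sd + \<sigma> d)"
      using le den2 by (simp add: field_simps)
    hence "\<sigma> d * (p + (1 - p) * real d) \<le> (1 - p) * Sd" by (simp add: algebra_simps)
    hence "\<sigma> d * (p + (1 - p) * real d) \<le> \<mu> * (p + (1 - p) * real d)" using mu_eq by simp
    hence "\<sigma> d \<le> \<mu>" using den by simp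
    moreover have "\<sigma> i \<le> \<sigma> d" using smono[of d i] i by simp
    ultimately show "\<sigma> i \<le> \<mu>" by simp
  qed
  have Sd0: "Sd \<ge> 0" unfolding Sd_def using snn dk by (intro sum_nonneg) auto
  have mu0: "\<mu> \<ge> 0" unfolding mu_def' using den p1 Sd0 by simp
  define s where "s = (\<Sum>i<k. max (\<sigma> i - \<mu>) 0)"
  have s_eq: "s = Sd - real d * \<mu>"
  proof -
    have "s = (\<Sum>i\<in>{0..<d}. max (\<sigma> i - \<mu>) 0) + (\<Sum>i\<in>{d..<k}. max (\<sigma> i - \<mu>) 0)"
      unfolding s_def lessThan_atLeast0 using dk by (simp add: sum.atLeastLessThan_concat)
    also have "(\<Sum>i\<in>{d..<k}. max (\<sigma> i - \<mu>) 0) = 0" using F2 by (intro sum.neutral) auto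
    also have "(\<Sum>i\<in>{0..<d}. max (\<sigma> i - \<mu>) 0) = (\<Sum>i\<in>{0..<d}. \<sigma> i - \<mu>)"
      using F1 by (intro sum.cong) (auto simp: less_imp_le)
    finally show ?thesis unfolding Sd_def lessThan_atLeast0 by (simp add: sum_subtractf)
  qed
  have mu_s: "\<mu> = (1 - p) / p * s"
  proof -
    have "p * \<mu> = (1 - p) * s" unfolding s_eq using mu_eq by (simp add: algebra_simps)
    thus ?thesis using p0 by (simp add: field_simps)
  qed
  define T where "T = soft_thr_diag \<mu> S"
  define B where "B = L * T * transpose_mat R"
  define E where "E = S - T"
  have Bdef: "L * soft_thr_diag (mu_thr p m n S) S * transpose_mat R = B"
    unfolding B_def T_def \<mu>_def ..
  have T: "T \<in> carrier_mat m n" unfolding T_def soft_thr_diag_def using S by simp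
  have Tent: "\<And>i j. i < m \<Longrightarrow> j < n \<Longrightarrow> T $$ (i,j) = (if i = j then max (\<sigma> i - \<mu>) 0 else 0)"
    unfolding T_def soft_thr_diag_def \<sigma>_def using S by auto
  have Tdiag: "diagonal_mat T" unfolding diagonal_mat_def using T Tent by auto
  have E: "E \<in> carrier_mat m n" unfolding E_def using T by (simp add: minus_carrier_mat)
  have Eent: "\<And>i j. i < m \<Longrightarrow> j < n \<Longrightarrow> E $$ (i,j) = (if i = j then \<sigma> i - max (\<sigma> i - \<mu>) 0 else 0)"
    unfolding E_def using T S Tent Sd by (auto simp: diagonal_mat_def \<sigma>_def)
  have Ediag: "diagonal_mat E" unfolding diagonal_mat_def using E Eent by auto
  have Ebound: "\<And>i. i < min m n \<Longrightarrow> \<bar>E$$(i,i)\<bar> \<le> \<mu>"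
  proof -
    fix i assume i: "i < min m n"
    hence "0 \<le> \<sigma> i" using snn unfolding k_def by simp
    thus "\<bar>E$$(i,i)\<bar> \<le> \<mu>" using Eent[of i i] i mu0 by (auto simp: max_def)
  qed
  have B: "B \<in> carrier_mat m n" unfolding B_def using L R T by simp
  have XB: "X - B = L * E * transpose_mat R"
  proof -
    have "L * S - L * T = L * E" unfolding E_def using mult_minus_distrib_mat[of L m m S n T] L S T by simp
    moreover have "L * S * transpose_mat R - L * T * transpose_mat R = (L * S - L * T) * transpose_mat R"
      using minus_mult_distrib_mat[of "L * S" m n "L * T" "transpose_mat R" n] L S T R by simp
    ultimately show ?thesis unfolding Xeq B_def by simp
  qed
  have nucB: "nuc_norm B = s"
  proof -
    note TT = diag_gram[OF T Tdiag]
    have "transpose_mat B * B = R * (transpose_mat T * T) * transpose_mat R"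
      unfolding B_def using gram_orth[OF L R(1) T] .
    hence "nuc_norm B = (\<Sum>j<n. sqrt ((transpose_mat T * T) $$ (j,j)))"
      using nuc_decomp[OF B R TT(1,2)] by simp
    also have "\<dots> = (\<Sum>j<n. if j < m then max (\<sigma> j - \<mu>) 0 else 0)"
      using TT(3) Tent by (intro sum.cong) auto
    also have "\<dots> = (\<Sum>j\<in>{..<n} \<inter> {..<m}. max (\<sigma> j - \<mu>) 0)" by (simp add: sum.inter_restrict)
    also have "{..<n} \<inter> {..<m} = {..<k}" unfolding k_def by auto
    finally show ?thesis unfolding s_def .
  qed
  have fipB: "fip (X - B) B = \<mu> * s"
  proof -
    have "fip (X - B) B = fip E T" unfolding XB using fip_orth[OF L R E T] by (simp add: B_def)
    also have "\<dots> = (\<Sum>i<min m n. E$$(i,i) * T$$(i,i))" using fip_diag[OF E Ediag] .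
    also have "\<dots> = (\<Sum>i<k. \<mu> * max (\<sigma> i - \<mu>) 0)"
      unfolding k_def using Eent Tent by (intro sum.cong) (auto simp: max_def)
    finally show ?thesis unfolding s_def by (simp add: sum_distrib_left)
  qed
  have XBc: "X - B \<in> carrier_mat m n" using B by (simp add: minus_carrier_mat)
  show ?thesis unfolding Bdef
  proof (intro conjI ballI impI)
    show "B \<in> carrier_mat m n" by (rule B)
    fix A assume A: "A \<in> carrier_mat m n" and ne: "A \<noteq> B"
    define lam where "lam = (1 - p) / p"
    define a where "a = nuc_norm A"
    define F where "F = fip (X - B) A"
    define h where "h = fip (B - A) (B - A)"
    have lam0: "lam > 0" unfolding lam_def using p0 p1 by simp
    have h1: "F \<le> \<mu> * a" unfolding F_def a_def XB using fip_bound[OF L R E Ediag Ebound mu0 A] .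
    have h2: "\<mu> * a = lam * (s * a)" unfolding mu_s lam_def by simp
    have h3: "\<mu> * s = lam * (s * s)" unfolding mu_s lam_def by simp
    have h4: "lam * ((s - a) * (s - a)) \<ge> 0" using lam0 by simp
    have h5: "lam * ((s - a) * (s - a)) = lam * (s * s) - 2 * (lam * (s * a)) + lam * (a * a)"
      by (simp add: algebra_simps)
    have hpos: "h > 0" unfolding h_def using fip_pos[OF A B ne] .
    have XAc: "X - A \<in> carrier_mat m n" using A by (simp add: minus_carrier_mat)
    have ex: "fip (X - A) (X - A) = fip (X - B) (X - B) + 2 * (\<mu> * s - F) + h"
      using fip_expand[OF X A B] fipB unfolding F_def h_def by simp
    have "(frob_norm (X - B))\<^sup>2 + lam * (nuc_norm B)\<^sup>2 = fip (X - B) (X - B) + lam * (s * s)"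
      using frob_sq[OF XBc] nucB by (simp add: power2_eq_square)
    also have "\<dots> < fip (X - A) (X - A) + lam * (a * a)"
      unfolding ex using lin_aux[OF h1 h2 h3 h4 h5 hpos] .
    also have "\<dots> = (frob_norm (X - A))\<^sup>2 + lam * (nuc_norm A)\<^sup>2"
      using frob_sq[OF XAc] unfolding a_def by (simp add: power2_eq_square)
    finally show "(frob_norm (X - B))\<^sup>2 + (1 - p) / p * (nuc_norm B)\<^sup>2
        < (frob_norm (X - A))\<^sup>2 + (1 - p) / p * (nuc_norm A)\<^sup>2" unfolding lam_def .
  qed
qed
end
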